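(* In the setting below, for every mask $m\in\{0,1\}^{|\mathrm H|}$, $$\Delta\mathcal L\le\sum_{h=1}^{|\mathrm H|}(1-m_h)\,\mathrm{HIS}_h+\frac{c}{2}\,\|W^O\|_2^2\sum_{h=1}^{|\mathrm H|}(1-m_h)\,\mathbb E_{x\sim\mathcal D}\bigl[\|A_h(x)\|_F^2\bigr],$$ with $c=\tfrac14$ if $\ell$ is binary (sigmoid) cross-entropy (so the coefficient is $\tfrac18\|W^O\|_2^2$) and $c=\tfrac12$ if $\ell$ is multiclass softmax cross-entropy (so the coefficient is $\tfrac14\|W^O\|_2^2$).
   Context: Setting: a multi-head attention layer with $|\mathrm H|$ heads; for each input $x\sim\mathcal D$, head $h$ outputs $A_h(x)\in\mathbb R^{n\times d_v}$ over $n$ tokens and $\mathbf y(x)=\operatorname{Concat}(A_1(x),\dots,A_{|\mathrm H|}(x))\in\mathbb R^{n\times d}$, $d=|\mathrm H|d_v$. For a mask $m\in\{0,1\}^{|\mathrm H|}$, $\mathbf y_m(x)=\operatorname{Concat}(m_1A_1(x),\dots,m_{|\mathrm H|}A_{|\mathrm H|}(x))$. The loss is $\mathcal L(x,\mathbf y)=\frac1n\sum_{t=1}^n\ell\bigl(\mathbf y(t)W^O;c_t(x)\bigr)$, where $\mathbf y(t)$ is the $t$-th row, $W^O\in\mathbb R^{d\times C}$ is a fixed output projection ($C=1$ in the binary case), $c_t(x)$ are labels and $\ell$ is binary cross-entropy $\ell(z;c)=-c\log\sigma(z)-(1-c)\log(1-\sigma(z))$ or multiclass cross-entropy $\ell(\mathbf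 z;c)=-\log\mathrm{softmax}(\mathbf z)_c$. Token-averaged Frobenius inner product/norm: $\langle U,V\rangle_F=\frac1n\sum_{i}\langle U(i),V(i)\rangle$, $\|U\|_F^2=\langle U,U\rangle_F$. $\mathrm{HIS}_h=\mathbb E_{x\sim\mathcal D}|\langle\nabla_{A_h}\mathcal L(x,\mathbf y(x)),A_h(x)\rangle_F|$ (gradient w.r.t. the token-averaged inner product), $\Delta\mathcal L=\mathbb E_{x\sim\mathcal D}[\mathcal L(x,\mathbf y_m(x))-\mathcal L(x,\mathbf y(x))]$; all expectations assumed finite. $\|W^O\|_2$ is the spectral norm. *)

theory Defs
  imports "HOL-Probability.Probability"
begin

text \<open>Matrices are represented as functions on nat indices with explicit bounds.
  A head output A_h(x) in R^{n x d_v} is  (\<lambda>t k. A h x t k)  with t < n, k < d_v.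
  A layer output y in R^{n x d} is  (\<lambda>t j. y t j)  with t < n, j < d = H * d_v.
  W^O in R^{d x C} is  (\<lambda>j c. W j c)  with j < d, c < C.\<close>

datatype lossKind = BinaryCE | MulticlassCE

definition sigmoid :: "real \<Rightarrow> real" where
  "sigmoid z = 1 / (1 + exp (- z))"

definition bce :: "real \<Rightarrow> real \<Rightarrow> real" where
  "bce z c = - c * ln (sigmoid z) - (1 - c) * ln (1 - sigmoid z)"

definition softmax :: "nat \<Rightarrow> (nat \<Rightarrow> real) \<Rightarrow> nat \<Rightarrow> real" where
  "softmax C z c = exp (z c) / (\<Sum>j<C. exp (z j))"

definition softmax_ce :: "nat \<Rightarrow> (nat \<Rightarrow> real) \<Rightarrow> nat \<Rightarrow> real" where
  "softmax_ce C z c = - ln (softmax C z c)"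

text \<open>per-token loss; in the binary case C = 1 and the logit is z 0\<close>
definition ell :: "lossKind \<Rightarrow> nat \<Rightarrow> (nat \<Rightarrow> real) \<Rightarrow> nat \<Rightarrow> real" where
  "ell kind C z c = (case kind of
      BinaryCE \<Rightarrow> bce (z 0) (real c)
    | MulticlassCE \<Rightarrow> softmax_ce C z c)"

definition concat_heads :: "nat \<Rightarrow> nat \<Rightarrow> (nat \<Rightarrow> nat \<Rightarrow> nat \<Rightarrow> real) \<Rightarrow> nat \<Rightarrow> nat \<Rightarrow> real" where
  "concat_heads H dv B t j = (if j < H * dv then B (j div dv) t (j mod dv) else 0)"

definition logits :: "nat \<Rightarrow> (nat \<Rightarrow> nat \<Rightarrow> real) \<Rightarrow> (nat \<Rightarrow> nat \<Rightarrow> real) \<Rightarrow> nat \<Rightarrow> nat \<Rightarrow> real" where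
  "logits d W y t = (\<lambda>c. \<Sum>j<d. y t j * W j c)"

definition tokLoss :: "lossKind \<Rightarrow> nat \<Rightarrow> nat \<Rightarrow> nat \<Rightarrow> (nat \<Rightarrow> nat \<Rightarrow> real)
    \<Rightarrow> (nat \<Rightarrow> nat) \<Rightarrow> (nat \<Rightarrow> nat \<Rightarrow> real) \<Rightarrow> real" where
  "tokLoss kind n d C W lab y = (1 / real n) * (\<Sum>t<n. ell kind C (logits d W y t) (lab t))"

definition frob2 :: "nat \<Rightarrow> nat \<Rightarrow> (nat \<Rightarrow> nat \<Rightarrow> real) \<Rightarrow> real" where
  "frob2 n dv U = (1 / real n) * (\<Sum>t<n. \<Sum>k<dv. (U t k)\<^sup>2)"

definition specnorm :: "nat \<Rightarrow> nat \<Rightarrow> (nat \<Rightarrow> nat \<Rightarrow> real) \<Rightarrow> real" where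
  "specnorm d C W = Sup {sqrt (\<Sum>c<C. (\<Sum>j<d. u j * W j c)\<^sup>2) | u. (\<Sum>j<d. (u j)\<^sup>2) \<le> 1}"

definition perturb_head :: "(nat \<Rightarrow> nat \<Rightarrow> nat \<Rightarrow> real) \<Rightarrow> nat \<Rightarrow> real \<Rightarrow> nat \<Rightarrow> nat \<Rightarrow> nat \<Rightarrow> real" where
  "perturb_head B h eps = (\<lambda>h' t k. if h' = h then B h' t k + eps * B h' t k else B h' t k)"

text \<open><grad_{A_h} L(x, y(x)), A_h(x)>_F  (gradient for the token-averaged inner product)
  = directional derivative of A_h \<mapsto> L(x, y) in direction A_h(x).\<close>
definition gradInner :: "lossKind \<Rightarrow> nat \<Rightarrow> nat \<Rightarrow> nat \<Rightarrow> nat \<Rightarrow> (nat \<Rightarrow> nat \<Rightarrow> real)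
    \<Rightarrow> (nat \<Rightarrow> nat) \<Rightarrow> (nat \<Rightarrow> nat \<Rightarrow> nat \<Rightarrow> real) \<Rightarrow> nat \<Rightarrow> real" where
  "gradInner kind n H dv C W lab B h =
     deriv (\<lambda>eps. tokLoss kind n (H * dv) C W lab (concat_heads H dv (perturb_head B h eps))) 0"

end

theory Submission
  imports Defs
begin


lemma second_order_bound:
  fixes f f' f'' :: "real \<Rightarrow> real"
  assumes d1: "\<And>s. (f has_real_derivative f' s) (at s)"
    and d2: "\<And>s. (f' has_real_derivative f'' s) (at s)"
    and b: "\<And>s. f'' s \<le> K"
  shows "f 1 \<le> f 0 + f' 0 + K/2"
proof -
  define diff where "diff = (\<lambda>m::nat. if m = 0 then f else if m = 1 then f' else f'')"
  have "\<exists>t::real. 0 < t \<and> t < 1 \<and>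
      f 1 = sum (\<lambda>m. (diff m 0 / fact m) * 1 ^ m) {..<2} + (diff 2 t / fact 2) * 1 ^ 2"
    by (rule Maclaurin) (auto simp: diff_def d1 d2 less_2_cases_iff)
  then obtain t where "f 1 = sum (\<lambda>m. (diff m 0 / fact m) * 1 ^ m) {..<2} + (diff 2 t / fact 2) * 1 ^ 2"
    by blast
  then have "f 1 = f 0 + f' 0 + f'' t / 2"
    by (simp add: diff_def numeral_2_eq_2 lessThan_Suc)
  then show ?thesis using b[of t] by simp
qed

lemma bce_closed: "bce z c = ln (1 + exp (-z)) + (1 - c) * z"
proof -
  have p: "1 + exp (-z) > 0" by (simp add: add_pos_pos)
  have s1: "sigmoid z = 1 / (1 + exp (-z))" by (simp add: sigmoid_def)
  have s2: "1 - sigmoid z = exp (-z) / (1 + exp (-z))"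
    using p by (simp add: sigmoid_def field_simps)
  have "ln (sigmoid z) = - ln (1 + exp (-z))" using p by (simp add: s1 ln_div)
  moreover have "ln (1 - sigmoid z) = -z - ln (1 + exp (-z))" using p by (simp add: s2 ln_div)
  ultimately show ?thesis unfolding bce_def by (simp only:) (simp add: algebra_simps)
qed

lemma sce_closed:
  assumes "c < C"
  shows "softmax_ce C z c = ln (\<Sum>j<C. exp (z j)) - z c"
proof -
  have "(\<Sum>j<C. exp (z j)) > 0" using assms by (intro sum_pos) auto
  then show ?thesis by (simp add: softmax_ce_def softmax_def ln_div)
qed

definition dell :: "lossKind \<Rightarrow> nat \<Rightarrow> (nat \<Rightarrow> real) \<Rightarrow> nat \<Rightarrow> (nat \<Rightarrow> real) \<Rightarrow> real" where
  "dell kind C z c v = (case kind of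
      BinaryCE \<Rightarrow> (1 - real c - exp (- z 0) / (1 + exp (- z 0))) * v 0
    | MulticlassCE \<Rightarrow> (\<Sum>j<C. exp (z j) * v j) / (\<Sum>j<C. exp (z j)) - v c)"

definition d2ell :: "lossKind \<Rightarrow> nat \<Rightarrow> (nat \<Rightarrow> real) \<Rightarrow> (nat \<Rightarrow> real) \<Rightarrow> real" where
  "d2ell kind C z v = (case kind of
      BinaryCE \<Rightarrow> (v 0)\<^sup>2 * (exp (- z 0) / (1 + exp (- z 0))\<^sup>2)
    | MulticlassCE \<Rightarrow> ((\<Sum>j<C. exp (z j) * (v j)\<^sup>2) * (\<Sum>j<C. exp (z j)) - (\<Sum>j<C. exp (z j) * v j)\<^sup>2)
                      / (\<Sum>j<C. exp (z j))\<^sup>2)"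

lemma D1:
  assumes "kind = MulticlassCE \<Longrightarrow> c < C"
  shows "((\<lambda>s. ell kind C (\<lambda>i. z i + s * v i) c) has_real_derivative
           dell kind C (\<lambda>i. z i + s * v i) c v) (at s)"
proof (cases kind)
  case BinaryCE
  have p: "1 + exp (- (z 0 + s * v 0)) > 0" by (simp add: add_pos_pos)
  have "((\<lambda>s. ln (1 + exp (- (z 0 + s * v 0))) + (1 - real c) * (z 0 + s * v 0)) has_real_derivative
           dell kind C (\<lambda>i. z i + s * v i) c v) (at s)"
    unfolding dell_def BinaryCE using p
    by (auto intro!: derivative_eq_intros simp: field_simps)
  then show ?thesis by (simp add: ell_def BinaryCE bce_closed)
next
  case MulticlassCE
  then have cC: "c < C" using assms by simp
  have p: "(\<Sum>j<C. exp (z j + s * v j)) > 0" using cC by (intro sum_pos) auto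
  have "((\<lambda>s. ln (\<Sum>j<C. exp (z j + s * v j)) - (z c + s * v c)) has_real_derivative
           dell kind C (\<lambda>i. z i + s * v i) c v) (at s)"
    unfolding dell_def MulticlassCE using p
    by (auto intro!: derivative_eq_intros simp: field_simps)
  then show ?thesis by (simp add: ell_def MulticlassCE sce_closed[OF cC])
qed

lemma D2:
  assumes "kind = MulticlassCE \<Longrightarrow> c < C"
  shows "((\<lambda>s. dell kind C (\<lambda>i. z i + s * v i) c v) has_real_derivative
           d2ell kind C (\<lambda>i. z i + s * v i) v) (at s)"
proof (cases kind)
  case BinaryCE
  have p: "1 + exp (- (z 0 + s * v 0)) > 0" by (simp add: add_pos_pos)
  show ?thesis
    unfolding dell_def d2ell_def BinaryCE using p
    by (auto intro!: derivative_eq_intros simp: field_simps power2_eq_square)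
next
  case MulticlassCE
  then have cC: "c < C" using assms by simp
  have p: "(\<Sum>j<C. exp (z j + s * v j)) > 0" using cC by (intro sum_pos) auto
  show ?thesis
    unfolding dell_def d2ell_def MulticlassCE using p
    by (auto intro!: derivative_eq_intros simp: field_simps power2_eq_square sum_distrib_left)
qed

lemma var_bound:
  fixes e v :: "nat \<Rightarrow> real"
  assumes pos: "\<And>j. j < C \<Longrightarrow> e j > 0"
  defines "Z \<equiv> (\<Sum>j<C. e j)"
  shows "2 * ((\<Sum>j<C. e j * (v j)\<^sup>2) * Z - (\<Sum>j<C. e j * v j)\<^sup>2) \<le> Z\<^sup>2 * (\<Sum>j<C. (v j)\<^sup>2)"
proof -
  have eq: "2 * ((\<Sum>j<C. e j * (v j)\<^sup>2) * Z - (\<Sum>j<C. e j * v j)\<^sup>2)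
      = (\<Sum>i<C. \<Sum>j<C. e i * e j * (v i - v j)\<^sup>2)"
  proof -
    have "(\<Sum>i<C. \<Sum>j<C. e i * e j * (v i - v j)\<^sup>2)
        = (\<Sum>i<C. \<Sum>j<C. e i * (v i)\<^sup>2 * e j) + (\<Sum>i<C. \<Sum>j<C. e j * (v j)\<^sup>2 * e i)
          - 2 * (\<Sum>i<C. \<Sum>j<C. (e i * v i) * (e j * v j))"
    proof -
      have sw: "(\<Sum>i<C. \<Sum>j<C. e i * (e j * (v j)\<^sup>2)) = (\<Sum>i<C. \<Sum>j<C. e i * (e j * (v i)\<^sup>2))"
        by (subst sum.swap) (simp add: algebra_simps)
      show ?thesis
        apply (simp add: power2_diff sum.distrib sum_subtractf sum_distrib_left algebra_simps)
        done
    qed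
    also have "\<dots> = 2 * ((\<Sum>j<C. e j * (v j)\<^sup>2) * Z - (\<Sum>j<C. e j * v j)\<^sup>2)"
    proof -
      have a: "(\<Sum>i<C. \<Sum>j<C. e i * (v i)\<^sup>2 * e j) = (\<Sum>j<C. e j * (v j)\<^sup>2) * Z"
        unfolding Z_def by (simp add: sum_distrib_left[symmetric] sum_distrib_right[symmetric])
      have b: "(\<Sum>i<C. \<Sum>j<C. e j * (v j)\<^sup>2 * e i) = (\<Sum>j<C. e j * (v j)\<^sup>2) * Z"
        unfolding Z_def by (simp add: sum_distrib_left[symmetric] sum_distrib_right[symmetric] mult.commute)
      have c: "(\<Sum>i<C. \<Sum>j<C. (e i * v i) * (e j * v j)) = (\<Sum>j<C. e j * v j)\<^sup>2"
        unfolding power2_eq_square by (simp add: sum_distrib_left[symmetric] sum_distrib_right[symmetric])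
      show ?thesis unfolding a b c by simp
    qed
    finally show ?thesis by simp
  qed
  define g where "g i j = (if i = j then 0 else e i * e j * (v i)\<^sup>2)" for i j
  have le: "e i * e j * (v i - v j)\<^sup>2 \<le> 2 * g i j + 2 * g j i" if "i < C" "j < C" for i j
  proof (cases "i = j")
    case True then show ?thesis by (simp add: g_def)
  next
    case False
    have "e i * e j > 0" using pos that by simp
    moreover have "(v i - v j)\<^sup>2 \<le> 2 * (v i)\<^sup>2 + 2 * (v j)\<^sup>2"
      using sum_squares_ge_zero[of "v i + v j" 0] by (simp add: power2_eq_square algebra_simps)
    ultimately have "e i * e j * (v i - v j)\<^sup>2 \<le> e i * e j * (2 * (v i)\<^sup>2 + 2 * (v j)\<^sup>2)"
      by (intro mult_left_mono) auto
    then show ?thesis using False by (simp add: g_def algebra_simps)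
  qed
  have sg: "(\<Sum>j<C. g i j) = e i * (v i)\<^sup>2 * (Z - e i)" if "i < C" for i
  proof -
    have "(\<Sum>j<C. g i j) = (\<Sum>j<C. e i * (v i)\<^sup>2 * e j - (if i = j then e i * (v i)\<^sup>2 * e j else 0))"
      by (intro sum.cong) (auto simp: g_def)
    also have "\<dots> = e i * (v i)\<^sup>2 * Z - e i * (v i)\<^sup>2 * e i"
      using that by (simp add: sum_subtractf sum_distrib_left Z_def)
    finally show ?thesis by (simp add: algebra_simps)
  qed
  have "(\<Sum>i<C. \<Sum>j<C. e i * e j * (v i - v j)\<^sup>2) \<le> (\<Sum>i<C. \<Sum>j<C. 2 * g i j + 2 * g j i)"
    by (intro sum_mono le) auto
  also have "\<dots> = 4 * (\<Sum>i<C. \<Sum>j<C. g i j)"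
  proof -
    have "(\<Sum>i<C. \<Sum>j<C. g j i) = (\<Sum>i<C. \<Sum>j<C. g i j)" by (rule sum.swap)
    then show ?thesis by (simp add: sum.distrib sum_distrib_left[symmetric])
  qed
  also have "\<dots> = 4 * (\<Sum>i<C. e i * (Z - e i) * (v i)\<^sup>2)"
    by (simp add: sg algebra_simps)
  also have "\<dots> \<le> 4 * (\<Sum>i<C. Z\<^sup>2 / 4 * (v i)\<^sup>2)"
  proof -
    have "e i * (Z - e i) \<le> Z\<^sup>2 / 4" for i
      using sum_squares_ge_zero[of "Z - 2 * e i" 0] by (simp add: power2_eq_square algebra_simps)
    then show ?thesis by (intro mult_left_mono sum_mono mult_right_mono) auto
  qed
  also have "\<dots> = Z\<^sup>2 * (\<Sum>j<C. (v j)\<^sup>2)"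
    by (simp add: sum_distrib_left)
  finally show ?thesis using eq by simp
qed

definition Kc :: "lossKind \<Rightarrow> real" where
  "Kc kind = (if kind = BinaryCE then 1/4 else 1/2)"

lemma d2_bound:
  assumes "kind = BinaryCE \<Longrightarrow> C = 1" "kind = MulticlassCE \<Longrightarrow> 0 < C"
  shows "d2ell kind C z v \<le> Kc kind * (\<Sum>i<C. (v i)\<^sup>2)"
proof (cases kind)
  case BinaryCE
  define e where "e = exp (- z 0)"
  have ep: "e > 0" by (simp add: e_def)
  have "e / (1 + e)\<^sup>2 \<le> 1/4"
    using ep sum_squares_ge_zero[of "1 - e" 0]
    by (simp add: field_simps power2_eq_square)
  then have "(v 0)\<^sup>2 * (e / (1 + e)\<^sup>2) \<le> (v 0)\<^sup>2 * (1/4)"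
    by (intro mult_left_mono) auto
  then show ?thesis using assms(1) BinaryCE by (simp add: d2ell_def Kc_def e_def)
next
  case MulticlassCE
  define Z where "Z = (\<Sum>j<C. exp (z j))"
  have Zp: "Z > 0" unfolding Z_def using assms(2) MulticlassCE by (intro sum_pos) auto
  have "2 * ((\<Sum>j<C. exp (z j) * (v j)\<^sup>2) * Z - (\<Sum>j<C. exp (z j) * v j)\<^sup>2) \<le> Z\<^sup>2 * (\<Sum>j<C. (v j)\<^sup>2)"
    unfolding Z_def by (rule var_bound) auto
  then show ?thesis using Zp MulticlassCE
    by (simp add: d2ell_def Kc_def Z_def[symmetric] field_simps)
qed

lemma token_bound:
  assumes "kind = BinaryCE \<Longrightarrow> C = 1" "kind = MulticlassCE \<Longrightarrow> c < C"
  shows "ell kind C (\<lambda>i. z i + v i) c \<le> ell kind C z c + dell kind C z c v + Kc kind / 2 * (\<Sum>i<C. (v i)\<^sup>2)"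
proof -
  have "(\<lambda>s. ell kind C (\<lambda>i. z i + s * v i) c) 1
     \<le> (\<lambda>s. ell kind C (\<lambda>i. z i + s * v i) c) 0 + (\<lambda>s. dell kind C (\<lambda>i. z i + s * v i) c v) 0
        + Kc kind * (\<Sum>i<C. (v i)\<^sup>2) / 2"
    by (rule second_order_bound[OF D1 D2 d2_bound]) (use assms in auto)
  then show ?thesis by simp
qed



lemma specnorm_bound:
  "(\<Sum>c<C. (\<Sum>j<d. u j * W j c)\<^sup>2) \<le> (specnorm d C W)\<^sup>2 * (\<Sum>j<d. (u j)\<^sup>2)"
proof -
  define Sset where "Sset = {sqrt (\<Sum>c<C. (\<Sum>j<d. u j * W j c)\<^sup>2) | u. (\<Sum>j<d. (u j)\<^sup>2) \<le> 1}"
  have S_def': "specnorm d C W = Sup Sset" by (simp add: specnorm_def Sset_def)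
  have bdd: "bdd_above Sset"
  proof (rule bdd_aboveI)
    fix s assume "s \<in> Sset"
    then obtain u' where s: "s = sqrt (\<Sum>c<C. (\<Sum>j<d. u' j * W j c)\<^sup>2)" and u': "(\<Sum>j<d. (u' j)\<^sup>2) \<le> 1"
      by (auto simp: Sset_def)
    have ub: "\<bar>u' j\<bar> \<le> 1" if "j < d" for j
    proof -
      have "(u' j)\<^sup>2 \<le> (\<Sum>j<d. (u' j)\<^sup>2)"
        using that by (intro member_le_sum) auto
      then have "(u' j)\<^sup>2 \<le> 1\<^sup>2" using u' by simp
      then show ?thesis using abs_le_square_iff[of "u' j" 1] by simp
    qed
    have "(\<Sum>j<d. u' j * W j c)\<^sup>2 \<le> (\<Sum>j<d. \<bar>W j c\<bar>)\<^sup>2" for c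
    proof -
      have "\<bar>\<Sum>j<d. u' j * W j c\<bar> \<le> (\<Sum>j<d. \<bar>u' j * W j c\<bar>)" by (rule sum_abs)
      also have "\<dots> \<le> (\<Sum>j<d. \<bar>W j c\<bar>)"
        using ub by (intro sum_mono) (auto simp: abs_mult intro: mult_left_le_one_le)
      finally have "\<bar>\<Sum>j<d. u' j * W j c\<bar> \<le> \<bar>\<Sum>j<d. \<bar>W j c\<bar>\<bar>" by simp
      then show ?thesis using abs_le_square_iff[of "\<Sum>j<d. u' j * W j c" "\<Sum>j<d. \<bar>W j c\<bar>"] by simp
    qed
    then have "(\<Sum>c<C. (\<Sum>j<d. u' j * W j c)\<^sup>2) \<le> (\<Sum>c<C. (\<Sum>j<d. \<bar>W j c\<bar>)\<^sup>2)"
      by (intro sum_mono) auto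
    then show "s \<le> sqrt (\<Sum>c<C. (\<Sum>j<d. \<bar>W j c\<bar>)\<^sup>2)" unfolding s by simp
  qed
  define r where "r = sqrt (\<Sum>j<d. (u j)\<^sup>2)"
  have r0: "r \<ge> 0" by (simp add: r_def sum_nonneg)
  have r2: "r\<^sup>2 = (\<Sum>j<d. (u j)\<^sup>2)" by (simp add: r_def sum_nonneg)
  show ?thesis
  proof (cases "r = 0")
    case True
    then have "(\<Sum>j<d. (u j)\<^sup>2) = 0" using r2 by simp
    then have "\<forall>j\<in>{..<d}. (u j)\<^sup>2 = 0" by (subst (asm) sum_nonneg_eq_0_iff) auto
    then have "(\<Sum>c<C. (\<Sum>j<d. u j * W j c)\<^sup>2) = 0" by simp
    then show ?thesis by (simp add: sum_nonneg)
  next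
    case False
    then have rp: "r > 0" using r0 by simp
    define u' where "u' j = u j / r" for j
    have "(\<Sum>j<d. (u' j)\<^sup>2) = (\<Sum>j<d. (u j)\<^sup>2) / r\<^sup>2"
      by (simp add: u'_def power_divide sum_divide_distrib)
    also have "\<dots> = 1" using rp r2[symmetric] by simp
    finally have "sqrt (\<Sum>c<C. (\<Sum>j<d. u' j * W j c)\<^sup>2) \<in> Sset" unfolding Sset_def by auto
    then have le: "sqrt (\<Sum>c<C. (\<Sum>j<d. u' j * W j c)\<^sup>2) \<le> specnorm d C W"
      unfolding S_def' using bdd by (rule cSup_upper)
    have "(\<Sum>c<C. (\<Sum>j<d. u' j * W j c)\<^sup>2) = (\<Sum>c<C. (\<Sum>j<d. u j * W j c)\<^sup>2) / r\<^sup>2"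
      by (simp add: u'_def power_divide sum_divide_distrib[symmetric])
    then have "sqrt (\<Sum>c<C. (\<Sum>j<d. u j * W j c)\<^sup>2) / r \<le> specnorm d C W"
      using le rp by (simp add: real_sqrt_divide)
    then have "sqrt (\<Sum>c<C. (\<Sum>j<d. u j * W j c)\<^sup>2) \<le> specnorm d C W * r"
      using rp by (simp add: divide_le_eq)
    then have "(sqrt (\<Sum>c<C. (\<Sum>j<d. u j * W j c)\<^sup>2))\<^sup>2 \<le> (specnorm d C W * r)\<^sup>2"
      by (intro power_mono) (auto simp: sum_nonneg)
    then show ?thesis by (simp add: sum_nonneg power_mult_distrib r2)
  qed
qed



lemma dell_lin:
  "dell kind C z c (\<lambda>i. \<Sum>h<H. a h * w h i) = (\<Sum>h<H. a h * dell kind C z c (w h))"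
proof (cases kind)
  case BinaryCE show ?thesis
    unfolding dell_def BinaryCE lossKind.case sum_distrib_left
    by (rule sum.cong) (auto simp: mult_ac)
next
  case MulticlassCE
  have "(\<Sum>j<C. exp (z j) * (\<Sum>h<H. a h * w h j)) = (\<Sum>h<H. a h * (\<Sum>j<C. exp (z j) * w h j))"
    by (simp add: sum_distrib_left sum.swap[of _ "{..<H}"] algebra_simps)
  then show ?thesis using MulticlassCE
    by (simp add: dell_def sum_divide_distrib[where A="{..<H}"] sum_subtractf right_diff_distrib
        times_divide_eq_right)
qed

lemma logits_lin:
  "logits d W (\<lambda>t j. Y t j + s * D t j) t = (\<lambda>c. logits d W Y t c + s * logits d W D t c)"
  by (simp add: logits_def sum.distrib sum_distrib_left algebra_simps)

lemma logits_sum: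
  "logits d W (\<lambda>t j. \<Sum>h<H. a h * D h t j) t c = (\<Sum>h<H. a h * logits d W (D h) t c)"
  by (simp add: logits_def sum_distrib_left sum_distrib_right sum.swap[of _ "{..<d}"] algebra_simps)

lemma tokLoss_eq:
  "tokLoss kind n d C W lab Y = (1 / real n) * (\<Sum>t<n. ell kind C (\<lambda>c. logits d W Y t c) (lab t))"
  by (simp add: tokLoss_def)

lemma group_sum:
  fixes f :: "nat \<Rightarrow> real"
  shows "(\<Sum>j<H * dv. f j) = (\<Sum>h<H. \<Sum>k<dv. f (h * dv + k))"
proof -
  have "(\<Sum>j<H * dv. f j) = (\<Sum>h<H. sum f {h * dv..<h * dv + dv})"
    by (rule sum.nat_group[symmetric])
  also have "\<dots> = (\<Sum>h<H. \<Sum>k<dv. f (h * dv + k))"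
  proof (rule sum.cong[OF refl])
    fix h assume "h \<in> {..<H}"
    show "sum f {h * dv..<h * dv + dv} = (\<Sum>k<dv. f (h * dv + k))"
      using sum.shift_bounds_nat_ivl[of f 0 "h*dv" dv] by (simp add: lessThan_atLeast0 add.commute)
  qed
  finally show ?thesis .
qed



lemma aux_lin:
  fixes r k :: real
  shows "(1/r) * ((\<Sum>h<H. a h * G h) + (\<Sum>t<n. k * F t))
     = (\<Sum>h<H. a h * ((1/r) * G h)) + (1/r) * (\<Sum>t<n. k * F t)"
  by (simp add: distrib_left sum_distrib_left mult.left_commute)

lemma logits_lin1:
  "logits d W (\<lambda>t j. Y t j + D t j) t = (\<lambda>c. logits d W Y t c + logits d W D t c)"
  using logits_lin[of d W Y 1 D t] by simp

lemma per_sample: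
  fixes B :: "nat \<Rightarrow> nat \<Rightarrow> nat \<Rightarrow> real" and lab' :: "nat \<Rightarrow> nat" and m :: "nat \<Rightarrow> real"
  assumes n0: "n > 0"
    and bin: "kind = BinaryCE \<Longrightarrow> C = 1"
    and mul: "kind = MulticlassCE \<Longrightarrow> (\<forall>t<n. lab' t < C)"
    and m01: "\<forall>h<H. m h \<in> {0, 1}"
  shows "tokLoss kind n (H * dv) C W lab' (concat_heads H dv (\<lambda>h t k. m h * B h t k))
         - tokLoss kind n (H * dv) C W lab' (concat_heads H dv B)
       \<le> (\<Sum>h<H. (1 - m h) * \<bar>gradInner kind n H dv C W lab' B h\<bar>)
         + Kc kind / 2 * (specnorm (H * dv) C W)\<^sup>2 * (\<Sum>h<H. (1 - m h) * frob2 n dv (B h))"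
proof -
  define d where "d = H * dv"
  define y where "y = concat_heads H dv B"
  define z where "z t = logits d W y t" for t
  define Dh where "Dh h = concat_heads H dv (\<lambda>h' t k. if h' = h then B h' t k else 0)" for h
  define vh where "vh h t = logits d W (Dh h) t" for h t
  define Dl where "Dl = concat_heads H dv (\<lambda>h t k. (m h - 1) * B h t k)"
  define vD where "vD t = logits d W Dl t" for t
  define S where "S = specnorm d C W"
  define K where "K = Kc kind"
  have F1: "concat_heads H dv (\<lambda>h t k. m h * B h t k) = (\<lambda>t j. y t j + 1 * Dl t j)"
    by (auto simp: fun_eq_iff y_def Dl_def concat_heads_def algebra_simps)
  have Dl_sum: "Dl t j = (\<Sum>h<H. (m h - 1) * Dh h t j)" for t j
  proof (cases "j < H * dv")
    case True
    then have "j div dv < H" by (simp add: less_mult_imp_div_less)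
    then show ?thesis using True
      by (simp add: Dl_def Dh_def concat_heads_def if_distrib[of "\<lambda>x. _ * x"] sum.delta' cong: if_cong)
  next
    case False then show ?thesis by (simp add: Dl_def Dh_def concat_heads_def)
  qed
  have F3: "vD t = (\<lambda>c. \<Sum>h<H. (m h - 1) * vh h t c)" for t
  proof -
    have DlE: "Dl = (\<lambda>t j. \<Sum>h<H. (m h - 1) * Dh h t j)" by (simp add: fun_eq_iff Dl_sum)
    show ?thesis unfolding vD_def vh_def by (subst DlE) (rule ext, rule logits_sum)
  qed
  have lab_ok: "kind = MulticlassCE \<Longrightarrow> lab' t < C" if "t < n" for t
    using mul that by auto
  have F4: "gradInner kind n H dv C W lab' B h = (1 / real n) * (\<Sum>t<n. dell kind C (z t) (lab' t) (vh h t))" for h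
  proof -
    have pe: "concat_heads H dv (perturb_head B h s) = (\<lambda>t j. y t j + s * Dh h t j)" for s
      by (auto simp: fun_eq_iff y_def Dh_def concat_heads_def perturb_head_def)
    have fe: "(\<lambda>s. tokLoss kind n d C W lab' (concat_heads H dv (perturb_head B h s)))
        = (\<lambda>s. (1 / real n) * (\<Sum>t<n. ell kind C (\<lambda>c. z t c + s * vh h t c) (lab' t)))"
      by (simp add: fun_eq_iff pe tokLoss_eq logits_lin z_def vh_def)
    have "((\<lambda>s. (1 / real n) * (\<Sum>t<n. ell kind C (\<lambda>c. z t c + s * vh h t c) (lab' t))) has_real_derivative
          (1 / real n) * (\<Sum>t<n. dell kind C (\<lambda>c. z t c + 0 * vh h t c) (lab' t) (vh h t))) (at 0)"
      by (intro DERIV_cmult DERIV_sum D1 lab_ok) auto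
    then have "deriv (\<lambda>s. tokLoss kind n d C W lab' (concat_heads H dv (perturb_head B h s))) 0
        = (1 / real n) * (\<Sum>t<n. dell kind C (z t) (lab' t) (vh h t))"
      unfolding fe by (simp add: DERIV_imp_deriv)
    then show ?thesis by (simp add: gradInner_def d_def)
  qed
  have F5: "(\<Sum>j<d. (Dl t j)\<^sup>2) = (\<Sum>h<H. (1 - m h) * (\<Sum>k<dv. (B h t k)\<^sup>2))" for t
  proof -
    have "(\<Sum>j<d. (Dl t j)\<^sup>2) = (\<Sum>h<H. \<Sum>k<dv. (Dl t (h * dv + k))\<^sup>2)"
      unfolding d_def by (rule group_sum)
    also have "\<dots> = (\<Sum>h<H. \<Sum>k<dv. (1 - m h) * (B h t k)\<^sup>2)"
    proof (rule sum.cong[OF refl], rule sum.cong[OF refl])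
      fix h k assume h: "h \<in> {..<H}" and k: "k \<in> {..<dv}"
      have hk: "h * dv + k < H * dv"
      proof -
        have "h * dv + k < h * dv + dv" using k by simp
        also have "\<dots> = Suc h * dv" by simp
        also have "\<dots> \<le> H * dv" using h by (intro mult_right_mono) auto
        finally show ?thesis .
      qed
      have dv: "(h * dv + k) div dv = h" "(h * dv + k) mod dv = k" using k by auto
      have "((m h - 1) * B h t k)\<^sup>2 = (1 - m h) * (B h t k)\<^sup>2"
        using m01 h by (auto simp: power2_eq_square)
      then show "(Dl t (h * dv + k))\<^sup>2 = (1 - m h) * (B h t k)\<^sup>2"
        using hk dv by (simp add: Dl_def concat_heads_def)
    qed
    also have "\<dots> = (\<Sum>h<H. (1 - m h) * (\<Sum>k<dv. (B h t k)\<^sup>2))"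
      by (simp add: sum_distrib_left)
    finally show ?thesis .
  qed
  have tok: "ell kind C (\<lambda>c. z t c + vD t c) (lab' t)
      \<le> ell kind C (z t) (lab' t) + dell kind C (z t) (lab' t) (vD t) + K / 2 * (\<Sum>c<C. (vD t c)\<^sup>2)"
    if "t < n" for t
    unfolding K_def by (rule token_bound) (use bin lab_ok that in auto)
  have sq: "(\<Sum>c<C. (vD t c)\<^sup>2) \<le> S\<^sup>2 * (\<Sum>h<H. (1 - m h) * (\<Sum>k<dv. (B h t k)\<^sup>2))" for t
    using specnorm_bound[where C=C and d=d and u="Dl t" and W=W] unfolding vD_def logits_def S_def F5 by simp
  have K0: "K \<ge> 0" by (simp add: K_def Kc_def)
  have "tokLoss kind n d C W lab' (concat_heads H dv (\<lambda>h t k. m h * B h t k))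
         - tokLoss kind n d C W lab' y
      = (1 / real n) * (\<Sum>t<n. ell kind C (\<lambda>c. z t c + vD t c) (lab' t) - ell kind C (z t) (lab' t))"
    by (simp add: F1 tokLoss_eq logits_lin1 z_def vD_def sum_subtractf right_diff_distrib)
  also have "\<dots> \<le> (1 / real n) * (\<Sum>t<n. dell kind C (z t) (lab' t) (vD t)
        + K / 2 * (S\<^sup>2 * (\<Sum>h<H. (1 - m h) * (\<Sum>k<dv. (B h t k)\<^sup>2))))"
  proof (intro mult_left_mono sum_mono)
    fix t assume "t \<in> {..<n}"
    then show "ell kind C (\<lambda>c. z t c + vD t c) (lab' t) - ell kind C (z t) (lab' t)
        \<le> dell kind C (z t) (lab' t) (vD t) + K / 2 * (S\<^sup>2 * (\<Sum>h<H. (1 - m h) * (\<Sum>k<dv. (B h t k)\<^sup>2)))"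
      using tok[of t] mult_left_mono[OF sq[of t], of "K/2"] K0 by auto
  qed simp
  also have "\<dots> = (\<Sum>h<H. (m h - 1) * gradInner kind n H dv C W lab' B h)
        + K / 2 * S\<^sup>2 * (\<Sum>h<H. (1 - m h) * frob2 n dv (B h))"
  proof -
    have P1: "(\<Sum>t<n. dell kind C (z t) (lab' t) (vD t))
        = (\<Sum>h<H. (m h - 1) * (\<Sum>t<n. dell kind C (z t) (lab' t) (vh h t)))"
      unfolding F3 dell_lin sum_distrib_left by (rule sum.swap)
    have P2: "(\<Sum>t<n. K / 2 * (S\<^sup>2 * (\<Sum>h<H. (1 - m h) * (\<Sum>k<dv. (B h t k)\<^sup>2))))
        = K / 2 * S\<^sup>2 * (\<Sum>h<H. (1 - m h) * (\<Sum>t<n. \<Sum>k<dv. (B h t k)\<^sup>2))"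
      by (simp add: sum_distrib_left sum.swap[of _ "{..<n}"] mult.assoc)
    have P3: "(1 / real n) * (\<Sum>t<n. K / 2 * (S\<^sup>2 * (\<Sum>h<H. (1 - m h) * (\<Sum>k<dv. (B h t k)\<^sup>2))))
       = K / 2 * S\<^sup>2 * (\<Sum>h<H. (1 - m h) * frob2 n dv (B h))"
      unfolding P2 frob2_def by (simp add: sum_distrib_left mult_ac)
    show ?thesis
      unfolding sum.distrib[of _ _ "{..<n}"] P1 aux_lin P3 F4 ..
  qed
  also have "\<dots> \<le> (\<Sum>h<H. (1 - m h) * \<bar>gradInner kind n H dv C W lab' B h\<bar>)
        + K / 2 * S\<^sup>2 * (\<Sum>h<H. (1 - m h) * frob2 n dv (B h))"
  proof -
    have "(m h - 1) * g \<le> (1 - m h) * \<bar>g\<bar>" if "h < H" for h g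
      using m01 that by auto
    then show ?thesis by (intro add_right_mono sum_mono) auto
  qed
  finally show ?thesis by (simp add: d_def y_def K_def S_def)
qed



theorem mainTheorem4:
  fixes M :: "'x measure"
    and kind :: lossKind
    and H dv n C :: nat
    and A :: "nat \<Rightarrow> 'x \<Rightarrow> nat \<Rightarrow> nat \<Rightarrow> real"
    and W :: "nat \<Rightarrow> nat \<Rightarrow> real"
    and lab :: "'x \<Rightarrow> nat \<Rightarrow> nat"
    and m :: "nat \<Rightarrow> real"
  defines "Lfull \<equiv> (\<lambda>x. tokLoss kind n (H * dv) C W (lab x) (concat_heads H dv (\<lambda>h. A h x)))"
      and "Lmask \<equiv> (\<lambda>x. tokLoss kind n (H * dv) C W (lab x)
                            (concat_heads H dv (\<lambda>h t k. m h * A h x t k)))"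
      and "HIS \<equiv> (\<lambda>h. \<integral>x. \<bar>gradInner kind n H dv C W (lab x) (\<lambda>h'. A h' x) h\<bar> \<partial>M)"
      and "cst \<equiv> (if kind = BinaryCE then 1/4 else 1/2 :: real)"
  assumes "prob_space M"
    and "n > 0"
    and "kind = BinaryCE \<Longrightarrow> C = 1 \<and> (\<forall>x\<in>space M. \<forall>t<n. lab x t \<in> {0, 1})"
    and "kind = MulticlassCE \<Longrightarrow> (\<forall>x\<in>space M. \<forall>t<n. lab x t < C)"
    and "\<forall>h<H. m h \<in> {0, 1}"
    and "integrable M Lfull"
    and "integrable M Lmask"
    and "\<forall>h<H. integrable M (\<lambda>x. \<bar>gradInner kind n H dv C W (lab x) (\<lambda>h'. A h' x) h\<bar>)"
    and "\<forall>h<H. integrable M (\<lambda>x. frob2 n dv (A h x))"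
  shows "(\<integral>x. (Lmask x - Lfull x) \<partial>M)
           \<le> (\<Sum>h<H. (1 - m h) * HIS h)
             + cst / 2 * (specnorm (H * dv) C W)\<^sup>2
                 * (\<Sum>h<H. (1 - m h) * (\<integral>x. frob2 n dv (A h x) \<partial>M))"
proof -
  define G where "G h = (\<lambda>x. \<bar>gradInner kind n H dv C W (lab x) (\<lambda>h'. A h' x) h\<bar>)" for h
  define F where "F h = (\<lambda>x. frob2 n dv (A h x))" for h
  define Q where "Q = cst / 2 * (specnorm (H * dv) C W)\<^sup>2"
  have cK: "cst = Kc kind" by (simp add: cst_def Kc_def)
  have iG: "integrable M (G h)" if "h \<in> {..<H}" for h using assms(12) that by (simp add: G_def)
  have iF: "integrable M (F h)" if "h \<in> {..<H}" for h using assms(13) that by (simp add: F_def)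
  have ps: "Lmask x - Lfull x \<le> (\<Sum>h<H. (1 - m h) * G h x) + Q * (\<Sum>h<H. (1 - m h) * F h x)"
    if x: "x \<in> space M" for x
    unfolding Lmask_def Lfull_def G_def F_def Q_def cK
    by (rule per_sample) (use assms(6,7,8,9) x in auto)
  have "(\<integral>x. (Lmask x - Lfull x) \<partial>M)
      \<le> (\<integral>x. (\<Sum>h<H. (1 - m h) * G h x) + Q * (\<Sum>h<H. (1 - m h) * F h x) \<partial>M)"
  proof (rule integral_mono)
    show "integrable M (\<lambda>x. (\<Sum>h<H. (1 - m h) * G h x) + Q * (\<Sum>h<H. (1 - m h) * F h x))"
      using iG iF by (intro Bochner_Integration.integrable_add integrable_mult_right integrable_sum) auto
  qed (use assms(10,11) ps in auto)
  also have "\<dots> = (\<Sum>h<H. (1 - m h) * (\<integral>x. G h x \<partial>M)) + Q * (\<Sum>h<H. (1 - m h) * (\<integral>x. F h x \<partial>M))"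
  proof -
    have i1: "integrable M (\<lambda>x. \<Sum>h<H. (1 - m h) * G h x)"
      by (rule Bochner_Integration.integrable_sum, rule integrable_mult_right) (use iG in auto)
    have i2: "integrable M (\<lambda>x. Q * (\<Sum>h<H. (1 - m h) * F h x))"
      by (rule integrable_mult_right, rule Bochner_Integration.integrable_sum, rule integrable_mult_right) (use iF in auto)
    have e1: "(\<integral>x. (\<Sum>h<H. (1 - m h) * G h x) \<partial>M) = (\<Sum>h<H. (1 - m h) * (\<integral>x. G h x \<partial>M))"
      using iG by (subst Bochner_Integration.integral_sum) (auto intro: integrable_mult_right)
    have e2: "(\<integral>x. (\<Sum>h<H. (1 - m h) * F h x) \<partial>M) = (\<Sum>h<H. (1 - m h) * (\<integral>x. F h x \<partial>M))"
      using iF by (subst Bochner_Integration.integral_sum) (auto intro: integrable_mult_right)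
    show ?thesis
      using i1 i2 by (simp add: Bochner_Integration.integral_add e1 e2[symmetric])
  qed
  finally show ?thesis by (simp add: HIS_def G_def F_def Q_def)
qed


end
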